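(* Let $m,M,q,Q\ge1$ with $2m+q+1=2M+Q+1=n$. Let $\mathcal{A}=(A_0,\ldots,A_q)$ be a symmetric Clifford system on $\mathbb{R}^{2m}$ and $\mathcal{B}=(B_0,\ldots,B_Q)$ a symmetric Clifford system on $\mathbb{R}^{2M}$, and consider the cubics on $\mathbb{R}^n$ $$\Phi_{\mathcal{A}}(x)=\sum_{i=0}^q z_i\,y^TA_iy,\quad x=(y,z)\in\mathbb{R}^{2m}\oplus\mathbb{R}^{q+1}\cong\mathbb{R}^n,\qquad \Phi_{\mathcal{B}}(X)=\sum_{j=0}^Q Z_j\,Y^TB_jY,\quad X=(Y,Z)\in\mathbb{R}^{2M}\oplus\mathbb{R}^{Q+1}\cong\mathbb{R}^n.$$ If $\Phi_{\mathcal{A}}$ and $\Phi_{\mathcal{B}}$ are congruent, then $q=Q$.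
   Context: A (symmetric) Clifford system on $\mathbb{R}^{2m}$ with $q\ge1$ is a tuple $(A_0,\ldots,A_q)$ of symmetric $2m\times2m$ real matrices with $A_iA_j+A_jA_i=2\delta_{ij}I$ for all $0\le i,j\le q$. Two homogeneous polynomials $f_1,f_2$ on $\mathbb{R}^n$ are congruent if $f_1(x)=c\,f_2(Ux)$ for all $x$, for some orthogonal linear map $U$ of $\mathbb{R}^n$ and some real $c\neq0$. *)

theory Defs
  imports Main "HOL-Analysis.Analysis"
begin

text \<open>Vectors in R^k are represented as functions nat => real, only the coordinates
  with index < k being relevant; k x k matrices as nat => nat => real (entry (r,s)).\<close>

definition clifford_system :: "nat \<Rightarrow> nat \<Rightarrow> (nat \<Rightarrow> nat \<Rightarrow> nat \<Rightarrow> real) \<Rightarrow> bool" where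
  "clifford_system m q A \<longleftrightarrow>
     (\<forall>i\<le>q. \<forall>r<2*m. \<forall>s<2*m. A i r s = A i s r) \<and>
     (\<forall>i\<le>q. \<forall>j\<le>q. \<forall>r<2*m. \<forall>s<2*m.
        (\<Sum>k<2*m. A i r k * A j k s) + (\<Sum>k<2*m. A j r k * A i k s)
          = (if i = j \<and> r = s then 2 else 0))"

definition Phi :: "nat \<Rightarrow> nat \<Rightarrow> (nat \<Rightarrow> nat \<Rightarrow> nat \<Rightarrow> real) \<Rightarrow> (nat \<Rightarrow> real) \<Rightarrow> real" where
  "Phi m q A x = (\<Sum>i\<le>q. x (2*m + i) * (\<Sum>r<2*m. \<Sum>s<2*m. x r * A i r s * x s))"

definition orthogonal_mat :: "nat \<Rightarrow> (nat \<Rightarrow> nat \<Rightarrow> real) \<Rightarrow> bool" where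
  "orthogonal_mat n U \<longleftrightarrow>
     (\<forall>i<n. \<forall>j<n. (\<Sum>k<n. U k i * U k j) = (if i = j then 1 else 0))"

definition mat_apply :: "nat \<Rightarrow> (nat \<Rightarrow> nat \<Rightarrow> real) \<Rightarrow> (nat \<Rightarrow> real) \<Rightarrow> (nat \<Rightarrow> real)" where
  "mat_apply n U x = (\<lambda>i. if i < n then (\<Sum>j<n. U i j * x j) else 0)"

definition congruent_on :: "nat \<Rightarrow> ((nat \<Rightarrow> real) \<Rightarrow> real) \<Rightarrow> ((nat \<Rightarrow> real) \<Rightarrow> real) \<Rightarrow> bool" where
  "congruent_on n f g \<longleftrightarrow>
     (\<exists>U c. orthogonal_mat n U \<and> c \<noteq> 0 \<and>
        (\<forall>x. (\<forall>i\<ge>n. x i = 0) \<longrightarrow> f x = c * g (mat_apply n U x)))"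

end

theory Submission
  imports Jordan_Normal_Form.Determinant Defs
begin

lemma orth_rows:
  assumes "orthogonal_mat n U" "i < n" "j < n"
  shows "(\<Sum>k<n. U i k * U j k) = (if i = j then 1 else 0)"
proof -
  have sp: "\<And>f g. Matrix.scalar_prod (Matrix.vec n f) (Matrix.vec n g) = (\<Sum>k<n. f k * g k)"
    by (simp add: Matrix.scalar_prod_def lessThan_atLeast0)
  define W where "W = Matrix.mat n n (\<lambda>(a,b). U a b)"
  have W: "W \<in> carrier_mat n n" unfolding W_def by auto
  have Wt: "transpose_mat W \<in> carrier_mat n n" unfolding W_def by auto
  have "transpose_mat W * W = 1\<^sub>m n"
  proof (rule eq_matI)
    fix a b assume "a < dim_row (1\<^sub>m n :: real mat)" "b < dim_col (1\<^sub>m n :: real mat)"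
    then have ab: "a < n" "b < n" by auto
    have "(transpose_mat W * W) $$ (a,b) = (\<Sum>k<n. U k a * U k b)"
      using ab unfolding W_def by (simp add: Matrix.row_def Matrix.col_def sp)
    then show "(transpose_mat W * W) $$ (a,b) = 1\<^sub>m n $$ (a,b)"
      using assms(1) ab unfolding orthogonal_mat_def by auto
  qed (auto simp: W_def)
  from mat_mult_left_right_inverse[OF Wt W this]
  have "W * transpose_mat W = 1\<^sub>m n" .
  then have "(W * transpose_mat W) $$ (i,j) = 1\<^sub>m n $$ (i,j)" by simp
  then show ?thesis using assms(2,3) unfolding W_def
    by (simp add: Matrix.row_def Matrix.col_def sp)
qed

lemma arith_fin:
  fixes C m q M Q :: real
  assumes C: "C > 0" and pos: "m \<ge> 1" "M \<ge> 1" "q \<ge> 1" "Q \<ge> 1"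
    and e1: "C*(Q+1) = q+1 \<or> C*(Q+1) = m" and e2: "C*M = q+1 \<or> C*M = m"
    and tr: "m*(q+1) = C*(M*(Q+1))" and l: "2*m+q = 2*M+Q"
  shows "q = Q"
proof -
  have MQ: "M*(Q+1) > 0" using pos by simp
  have id: "C*(M*(Q+1))*(C-1) = (C*M)*(C*(Q+1)) - C*(M*(Q+1))" by (simp add: algebra_simps)
  have id2: "C*(M*(Q+1))*(C-1) = (C*(Q+1))*(C*M) - C*(M*(Q+1))" by (simp add: algebra_simps)
  have nz: "C*(M*(Q+1)) \<noteq> 0" using C MQ by (metis less_irrefl mult_pos_pos)
  from e1 e2 show ?thesis
  proof (elim disjE)
    assume a: "C*(Q+1) = q+1" "C*M = m"
    have "C*(M*(Q+1))*(C-1) = 0" unfolding id a using tr by (simp add: mult.commute)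
    then have "C = 1" using nz by simp
    then show ?thesis using a by simp
  next
    assume a: "C*(Q+1) = q+1" "C*M = q+1"
    then have "M = Q+1" using C by (metis mult_left_cancel less_irrefl)
    have "m*(q+1) = (Q+1)*(C*M)" using tr \<open>M = Q+1\<close> by (simp only: mult.commute mult.left_commute)
    then have "m*(q+1) = (Q+1)*(q+1)" using a by simp
    then have "m = Q+1" using pos by simp
    then show ?thesis using l \<open>M = Q+1\<close> by simp
  next
    assume a: "C*(Q+1) = m" "C*M = q+1"
    have "C*(M*(Q+1))*(C-1) = 0" unfolding id2 a using tr by simp
    then have "C = 1" using nz by simp
    then show ?thesis using a l by simp
  next
    assume a: "C*(Q+1) = m" "C*M = m"
    have "m*(q+1) = (C*M)*(Q+1)" using tr by (simp only: mult.assoc)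
    then have "m*(q+1) = m*(Q+1)" using a by simp
    then show ?thesis using pos by simp
  qed
qed

definition bil :: "nat \<Rightarrow> (nat \<Rightarrow> nat \<Rightarrow> nat \<Rightarrow> real) \<Rightarrow> nat \<Rightarrow> (nat \<Rightarrow> real) \<Rightarrow> (nat \<Rightarrow> real) \<Rightarrow> real" where
  "bil m A i u v = (\<Sum>r<2*m. \<Sum>s<2*m. u r * A i r s * v s)"

definition Pe :: "nat \<Rightarrow> nat \<Rightarrow> (nat \<Rightarrow> nat \<Rightarrow> nat \<Rightarrow> real) \<Rightarrow> (nat \<Rightarrow> real) \<Rightarrow> (nat \<Rightarrow> real) \<Rightarrow> (nat \<Rightarrow> real) \<Rightarrow> real" where
  "Pe m q A x u v = (\<Sum>i\<le>q. x (2*m+i) * bil m A i u v + u (2*m+i) * bil m A i x v + v (2*m+i) * bil m A i x u)"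

definition vp :: "(nat \<Rightarrow> real) \<Rightarrow> (nat \<Rightarrow> real) \<Rightarrow> (nat \<Rightarrow> real)" where
  "vp x u = (\<lambda>j. x j + u j)"

definition Pol :: "((nat \<Rightarrow> real) \<Rightarrow> real) \<Rightarrow> (nat \<Rightarrow> real) \<Rightarrow> (nat \<Rightarrow> real) \<Rightarrow> (nat \<Rightarrow> real) \<Rightarrow> real" where
  "Pol f x u v = f (vp (vp x u) v) - f (vp x u) - f (vp x v) - f (vp u v) + f x + f u + f v"

lemma bil_add1: "bil m A i (vp u u') v = bil m A i u v + bil m A i u' v"
  unfolding bil_def vp_def by (simp add: algebra_simps sum.distrib)
lemma bil_add2: "bil m A i u (vp v v') = bil m A i u v + bil m A i u v'"
  unfolding bil_def vp_def by (simp add: algebra_simps sum.distrib)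
lemma bil_sym:
  assumes "\<forall>r<2*m. \<forall>s<2*m. A i r s = A i s r"
  shows "bil m A i u v = bil m A i v u"
proof -
  have "bil m A i u v = (\<Sum>r<2*m. \<Sum>s<2*m. v s * A i s r * u r)"
    unfolding bil_def using assms by (intro sum.cong refl) (auto simp: mult.commute)
  also have "\<dots> = bil m A i v u" unfolding bil_def by (rule sum.swap)
  finally show ?thesis .
qed

lemma pol_term:
  fixes b :: "(nat \<Rightarrow> real) \<Rightarrow> (nat \<Rightarrow> real) \<Rightarrow> real"
  assumes a1: "\<And>u u' v. b (vp u u') v = b u v + b u' v"
    and a2: "\<And>u v v'. b u (vp v v') = b u v + b u v'"
    and sy: "\<And>u v. b u v = b v u"
  shows "vp (vp x u) v k * b (vp (vp x u) v) (vp (vp x u) v) - vp x u k * b (vp x u) (vp x u) - vp x v k * b (vp x v) (vp x v)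
     - vp u v k * b (vp u v) (vp u v) + x k * b x x + u k * b u u + v k * b v v
     = 2 * (x k * b u v + u k * b x v + v k * b x u)"
proof -
  have s1: "b u x = b x u" "b v x = b x v" "b v u = b u v" using sy by auto
  show ?thesis by (simp add: a1 a2 s1) (simp add: vp_def algebra_simps)
qed

lemma Pol_Phi:
  assumes "clifford_system m q A"
  shows "Pol (Phi m q A) x u v = 2 * Pe m q A x u v"
proof -
  have sym: "\<And>i u v. i \<le> q \<Longrightarrow> bil m A i u v = bil m A i v u"
    using assms unfolding clifford_system_def by (intro bil_sym) auto
  have ph: "\<And>x. Phi m q A x = (\<Sum>i\<le>q. x (2*m+i) * bil m A i x x)"
    unfolding Phi_def bil_def by (simp add: sum_distrib_left)
  show ?thesis
    unfolding Pol_def ph Pe_def sum_distrib_left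
    unfolding sum_subtractf[symmetric] sum.distrib[symmetric]
    by (intro sum.cong refl pol_term bil_add1 bil_add2 sym) auto
qed

definition ev :: "nat \<Rightarrow> nat \<Rightarrow> real" where "ev a = (\<lambda>j. if j = a then 1 else 0)"

lemma lin_basis:
  fixes F :: "(nat \<Rightarrow> real) \<Rightarrow> real"
  assumes add: "\<And>u u'. F (vp u u') = F u + F u'"
    and hom: "\<And>c u. F (\<lambda>j. c * u j) = c * F u"
    and loc: "\<And>u u'. (\<forall>j<n. u j = u' j) \<Longrightarrow> F u = F u'"
  shows "F u = (\<Sum>k<n. u k * F (ev k))"
proof -
  have "F u = (\<Sum>k<N. u k * F (ev k)) + F (\<lambda>j. if j < N then 0 else u j)" for N
  proof (induction N)
    case 0 then show ?case by simp
  next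
    case (Suc N)
    have "(\<lambda>j. if j < N then 0 else u j) = vp (\<lambda>j. u N * ev N j) (\<lambda>j. if j < Suc N then 0 else u j)"
      by (auto simp: vp_def ev_def fun_eq_iff less_Suc_eq)
    then have "F (\<lambda>j. if j < N then 0 else u j) = u N * F (ev N) + F (\<lambda>j. if j < Suc N then 0 else u j)"
      using add hom by (metis (no_types))
    then show ?case using Suc by simp
  qed
  from this[of n] have "F u = (\<Sum>k<n. u k * F (ev k)) + F (\<lambda>j. if j < n then 0 else u j)" .
  moreover have "F (\<lambda>j. if j < n then 0 else u j) = F (\<lambda>j. 0 * u j)" by (rule loc) simp
  moreover have "F (\<lambda>j. 0 * u j) = 0" using hom[of 0 u] by simp
  ultimately show ?thesis by simp
qed

lemma Pe_sym23:
  assumes "clifford_system m q A"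
  shows "Pe m q A x u v = Pe m q A x v u"
proof -
  have sym: "\<And>i u v. i \<le> q \<Longrightarrow> bil m A i u v = bil m A i v u"
    using assms unfolding clifford_system_def by (intro bil_sym) auto
  show ?thesis unfolding Pe_def by (intro sum.cong refl) (auto simp: sym[of _ u v])
qed

lemma Pe_sym12:
  assumes "clifford_system m q A"
  shows "Pe m q A x u v = Pe m q A u x v"
proof -
  have sym: "\<And>i u v. i \<le> q \<Longrightarrow> bil m A i u v = bil m A i v u"
    using assms unfolding clifford_system_def by (intro bil_sym) auto
  show ?thesis unfolding Pe_def by (intro sum.cong refl) (auto simp: sym[of _ u x] sym[of _ v x] sym[of _ v u])
qed

lemma bil_hom1: "bil m A i (\<lambda>j. c * u j) v = c * bil m A i u v"
  unfolding bil_def by (simp add: sum_distrib_left mult_ac)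
lemma bil_hom2: "bil m A i u (\<lambda>j. c * v j) = c * bil m A i u v"
  unfolding bil_def by (simp add: sum_distrib_left mult_ac)

lemma Pe_add2: "Pe m q A x (vp u u') v = Pe m q A x u v + Pe m q A x u' v"
  unfolding Pe_def by (simp add: bil_add1 bil_add2) (simp add: vp_def sum.distrib[symmetric] algebra_simps)
lemma Pe_hom2: "Pe m q A x (\<lambda>j. c * u j) v = c * Pe m q A x u v"
  unfolding Pe_def by (simp add: bil_hom1 bil_hom2 sum_distrib_left algebra_simps)
lemma Pe_loc2:
  assumes "\<forall>j<2*m+q+1. u j = u' j"
  shows "Pe m q A x u v = Pe m q A x u' v"
proof -
  have b1: "bil m A i u w = bil m A i u' w" for i w
    unfolding bil_def using assms by (intro sum.cong refl) auto
  have b2: "bil m A i w u = bil m A i w u'" for i w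
    unfolding bil_def using assms by (intro sum.cong refl) auto
  show ?thesis unfolding Pe_def using assms by (intro sum.cong refl) (auto simp: b1 b2)
qed

lemma Pe_lin2:
  "Pe m q A x u v = (\<Sum>k<2*m+q+1. u k * Pe m q A x (ev k) v)"
  by (rule lin_basis[where F = "\<lambda>u. Pe m q A x u v"]) (auto intro: Pe_add2 Pe_hom2 Pe_loc2)


lemma ma_vp: "mat_apply n U (vp a b) = vp (mat_apply n U a) (mat_apply n U b)"
  unfolding mat_apply_def vp_def by (auto simp: fun_eq_iff algebra_simps sum.distrib)

lemma Pe_transfer:
  assumes ca: "clifford_system m q A" "clifford_system M Q B"
    and h: "\<And>x. (\<forall>i\<ge>n. x i = 0) \<Longrightarrow> Phi m q A x = c * Phi M Q B (mat_apply n U x)"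
    and sx: "\<forall>i\<ge>n. x i = 0" "\<forall>i\<ge>n. u i = 0" "\<forall>i\<ge>n. v i = 0"
  shows "Pe m q A x u v = c * Pe M Q B (mat_apply n U x) (mat_apply n U u) (mat_apply n U v)"
proof -
  have s: "\<forall>i\<ge>n. vp a b i = 0" if "\<forall>i\<ge>n. a i = 0" "\<forall>i\<ge>n. b i = 0" for a b
    using that by (simp add: vp_def)
  have "2 * Pe m q A x u v = Pol (Phi m q A) x u v" using Pol_Phi[OF ca(1)] by simp
  also have "\<dots> = c * Pol (Phi M Q B) (mat_apply n U x) (mat_apply n U u) (mat_apply n U v)"
    unfolding Pol_def using sx
    by (simp add: h s ma_vp algebra_simps)
  also have "\<dots> = c * (2 * Pe M Q B (mat_apply n U x) (mat_apply n U u) (mat_apply n U v))"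
    using Pol_Phi[OF ca(2)] by simp
  finally show ?thesis by simp
qed

definition G :: "nat \<Rightarrow> nat \<Rightarrow> (nat \<Rightarrow> nat \<Rightarrow> nat \<Rightarrow> real) \<Rightarrow> nat \<Rightarrow> (nat \<Rightarrow> real) \<Rightarrow> (nat \<Rightarrow> real) \<Rightarrow> real" where
  "G m q A n x x' = (\<Sum>a<n. \<Sum>b<n. Pe m q A x (ev a) (ev b) * Pe m q A x' (ev a) (ev b))"

lemma rows_lemma:
  fixes U :: "nat \<Rightarrow> nat \<Rightarrow> real" and n :: nat
  assumes orth: "\<And>i j. i<n \<Longrightarrow> j<n \<Longrightarrow> (\<Sum>k<n. U i k * U j k) = (if i=j then 1 else (0::real))"
  shows "(\<Sum>a<n. (\<Sum>k<n. U k a * f k) * (\<Sum>k<n. U k a * g k)) = (\<Sum>k<n. f k * g k)"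
proof -
  have "(\<Sum>a<n. (\<Sum>k<n. U k a * f k) * (\<Sum>k<n. U k a * g k))
      = (\<Sum>a<n. \<Sum>k<n. \<Sum>l<n. U k a * f k * (U l a * g l))" by (simp add: sum_product)
  also have "\<dots> = (\<Sum>k<n. \<Sum>a<n. \<Sum>l<n. U k a * f k * (U l a * g l))" by (rule sum.swap)
  also have "\<dots> = (\<Sum>k<n. \<Sum>l<n. \<Sum>a<n. U k a * f k * (U l a * g l))"
    by (intro sum.cong refl sum.swap)
  also have "\<dots> = (\<Sum>k<n. \<Sum>l<n. f k * g l * (\<Sum>a<n. U k a * U l a))"
    by (simp add: sum_distrib_left mult_ac)
  also have "\<dots> = (\<Sum>k<n. \<Sum>l<n. f k * g l * (if k = l then 1 else 0))"
    by (intro sum.cong refl) (simp add: orth)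
  also have "\<dots> = (\<Sum>k<n. f k * g k)"
  proof (intro sum.cong refl)
    fix k assume "k \<in> {..<n}"
    have "(\<Sum>l<n. f k * g l * (if k = l then 1 else 0)) = (\<Sum>l<n. if k = l then f k * g l else 0)"
      by (intro sum.cong) auto
    also have "\<dots> = f k * g k" using \<open>k \<in> {..<n}\<close> by (subst sum.delta') auto
    finally show "(\<Sum>l<n. f k * g l * (if k = l then 1 else 0)) = f k * g k" .
  qed
  finally show ?thesis .
qed

lemma Pe_cols:
  assumes ca: "clifford_system M Q B" and nn: "n = 2*M+Q+1" and ab: "a < n" "b < n"
  shows "Pe M Q B w (mat_apply n U (ev a)) (mat_apply n U (ev b))
     = (\<Sum>k<n. U k a * (\<Sum>l<n. U l b * Pe M Q B w (ev k) (ev l)))"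
proof -
  have col: "mat_apply n U (ev a') k = U k a'" if "k < n" "a' < n" for a' k
    using that unfolding mat_apply_def ev_def by (simp add: if_distrib cong: if_cong)
  have "Pe M Q B w (mat_apply n U (ev a)) (mat_apply n U (ev b))
      = (\<Sum>k<n. mat_apply n U (ev a) k * Pe M Q B w (ev k) (mat_apply n U (ev b)))"
    using Pe_lin2[of M Q B w "mat_apply n U (ev a)" "mat_apply n U (ev b)"] unfolding nn[symmetric] .
  also have "\<dots> = (\<Sum>k<n. U k a * Pe M Q B w (ev k) (mat_apply n U (ev b)))"
    by (intro sum.cong refl) (simp add: col ab)
  also have "\<dots> = (\<Sum>k<n. U k a * (\<Sum>l<n. U l b * Pe M Q B w (ev k) (ev l)))"
  proof (intro sum.cong refl arg_cong2[where f = "(*)"])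
    fix k
    have "Pe M Q B w (ev k) (mat_apply n U (ev b)) = Pe M Q B w (mat_apply n U (ev b)) (ev k)"
      by (rule Pe_sym23[OF ca])
    also have "\<dots> = (\<Sum>l<n. mat_apply n U (ev b) l * Pe M Q B w (ev l) (ev k))"
      using Pe_lin2[of M Q B w "mat_apply n U (ev b)" "ev k"] unfolding nn[symmetric] .
    also have "\<dots> = (\<Sum>l<n. U l b * Pe M Q B w (ev k) (ev l))"
      by (intro sum.cong refl) (simp add: col ab Pe_sym23[OF ca, of w "ev k"])
    finally show "Pe M Q B w (ev k) (mat_apply n U (ev b)) = (\<Sum>l<n. U l b * Pe M Q B w (ev k) (ev l))" .
  qed
  finally show ?thesis .
qed

lemma G_transfer:
  assumes ca: "clifford_system m q A" "clifford_system M Q B"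
    and n1: "n = 2*M+Q+1"
    and orth: "\<And>i j. i<n \<Longrightarrow> j<n \<Longrightarrow> (\<Sum>k<n. U i k * U j k) = (if i=j then 1 else (0::real))"
    and h: "\<And>x. (\<forall>i\<ge>n. x i = 0) \<Longrightarrow> Phi m q A x = c * Phi M Q B (mat_apply n U x)"
    and sx: "\<forall>i\<ge>n. x i = 0" "\<forall>i\<ge>n. x' i = 0"
  shows "G m q A n x x' = c^2 * G M Q B n (mat_apply n U x) (mat_apply n U x')"
proof -
  define w where "w = mat_apply n U x"
  define w' where "w' = mat_apply n U x'"
  define X where "X = (\<lambda>k b. \<Sum>l<n. U l b * Pe M Q B w (ev k) (ev l))"
  define Y where "Y = (\<lambda>k b. \<Sum>l<n. U l b * Pe M Q B w' (ev k) (ev l))"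
  have se: "\<forall>i\<ge>n. ev a i = 0" if "a < n" for a using that by (auto simp: ev_def)
  have PX: "Pe m q A x (ev a) (ev b) = c * (\<Sum>k<n. U k a * X k b)" if "a < n" "b < n" for a b
  proof -
    have "Pe m q A x (ev a) (ev b) = c * Pe M Q B w (mat_apply n U (ev a)) (mat_apply n U (ev b))"
      unfolding w_def by (rule Pe_transfer[OF ca h sx(1) se[OF that(1)] se[OF that(2)]])
    also have "\<dots> = c * (\<Sum>k<n. U k a * X k b)"
      unfolding X_def by (simp only: Pe_cols[OF ca(2) n1 that])
    finally show ?thesis .
  qed
  have PY: "Pe m q A x' (ev a) (ev b) = c * (\<Sum>k<n. U k a * Y k b)" if "a < n" "b < n" for a b
  proof -
    have "Pe m q A x' (ev a) (ev b) = c * Pe M Q B w' (mat_apply n U (ev a)) (mat_apply n U (ev b))"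
      unfolding w'_def by (rule Pe_transfer[OF ca h sx(2) se[OF that(1)] se[OF that(2)]])
    also have "\<dots> = c * (\<Sum>k<n. U k a * Y k b)"
      unfolding Y_def by (simp only: Pe_cols[OF ca(2) n1 that])
    finally show ?thesis .
  qed
  have "G m q A n x x' = (\<Sum>a<n. \<Sum>b<n. c^2 * ((\<Sum>k<n. U k a * X k b) * (\<Sum>k<n. U k a * Y k b)))"
    unfolding G_def
  proof (intro sum.cong refl)
    fix a b assume "a \<in> {..<n}" "b \<in> {..<n}"
    then show "Pe m q A x (ev a) (ev b) * Pe m q A x' (ev a) (ev b) =
      c^2 * ((\<Sum>k<n. U k a * X k b) * (\<Sum>k<n. U k a * Y k b))"
      by (simp only: PX PY lessThan_iff power2_eq_square mult_ac)
  qed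
  also have "\<dots> = c^2 * (\<Sum>a<n. \<Sum>b<n. (\<Sum>k<n. U k a * X k b) * (\<Sum>k<n. U k a * Y k b))"
    by (simp only: sum_distrib_left)
  also have "\<dots> = c^2 * (\<Sum>b<n. \<Sum>a<n. (\<Sum>k<n. U k a * X k b) * (\<Sum>k<n. U k a * Y k b))"
    by (rule arg_cong[where f = "\<lambda>t. c^2 * t"], rule sum.swap)
  also have "\<dots> = c^2 * (\<Sum>b<n. \<Sum>k<n. X k b * Y k b)"
    by (simp only: rows_lemma[OF orth])
  also have "\<dots> = c^2 * (\<Sum>k<n. \<Sum>b<n. X k b * Y k b)"
    by (rule arg_cong[where f = "\<lambda>t. c^2 * t"], rule sum.swap)
  also have "\<dots> = c^2 * (\<Sum>k<n. \<Sum>l<n. Pe M Q B w (ev k) (ev l) * Pe M Q B w' (ev k) (ev l))"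
    unfolding X_def Y_def by (simp only: rows_lemma[OF orth])
  also have "\<dots> = c^2 * G M Q B n w w'" unfolding G_def ..
  finally show ?thesis unfolding w_def w'_def .
qed

lemma split_sum: "(\<Sum>a<(N::nat)+(q::nat)+1. f a) = (\<Sum>a<N. f a) + (\<Sum>j\<le>q. f (N+j))"
  by (induction q) (simp_all add: add.assoc)

lemma delta_r: assumes "finite S" shows "(\<Sum>s\<in>S. f s * (if s = b then 1 else (0::real))) = (if b \<in> S then f b else 0)"
proof -
  have "(\<Sum>s\<in>S. f s * (if s = b then 1 else (0::real))) = (\<Sum>s\<in>S. if s = b then f s else 0)"
    by (rule sum.cong) auto
  then show ?thesis using assms by (simp add: sum.delta)
qed
lemma delta_l: assumes "finite S" shows "(\<Sum>s\<in>S. (if s = b then 1 else (0::real)) * f s) = (if b \<in> S then f b else 0)"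
  using delta_r[OF assms, of f b] by (simp add: mult.commute)

lemma bil_ev1: "bil m A i (ev a) v = (if a < 2*m then (\<Sum>s<2*m. A i a s * v s) else 0)"
proof -
  have "bil m A i (ev a) v = (\<Sum>r<2*m. (if r = a then 1 else 0) * (\<Sum>s<2*m. A i r s * v s))"
    unfolding bil_def ev_def by (simp add: sum_distrib_left mult_ac)
  then show ?thesis by (simp add: delta_l)
qed
lemma bil_ev2: "bil m A i u (ev b) = (if b < 2*m then (\<Sum>r<2*m. u r * A i r b) else 0)"
proof -
  have "bil m A i u (ev b) = (\<Sum>r<2*m. (\<Sum>s<2*m. (u r * A i r s) * (if s = b then 1 else 0)))"
    unfolding bil_def ev_def by (simp add: mult_ac)
  also have "\<dots> = (\<Sum>r<2*m. if b < 2*m then u r * A i r b else 0)"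
    by (simp add: delta_r)
  finally show ?thesis by simp
qed

lemma bil_ev12: "bil m A i (ev a) (ev b) = (if a < 2*m \<and> b < 2*m then A i a b else 0)"
  unfolding bil_ev1 by (simp add: ev_def delta_r)

lemma Pe_P1:
  assumes "a < 2*m" "b < 2*m"
  shows "Pe m q A x (ev a) (ev b) = (\<Sum>i\<le>q. x (2*m+i) * A i a b)"
  unfolding Pe_def using assms by (intro sum.cong refl) (simp add: bil_ev12, simp add: ev_def)

lemma Pe_P2:
  assumes "a < 2*m" "j \<le> q"
  shows "Pe m q A x (ev a) (ev (2*m+j)) = (\<Sum>r<2*m. x r * A j r a)"
proof -
  have "Pe m q A x (ev a) (ev (2*m+j)) = (\<Sum>i\<le>q. if i = j then (\<Sum>r<2*m. x r * A i r a) else 0)"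
    unfolding Pe_def using assms by (intro sum.cong refl) (simp add: bil_ev12 bil_ev1 bil_ev2, simp add: ev_def)
  also have "\<dots> = (\<Sum>r<2*m. x r * A j r a)" using assms(2) by (subst sum.delta) auto
  finally show ?thesis .
qed

lemma Pe_P4:
  shows "Pe m q A x (ev (2*m+i)) (ev (2*m+j)) = 0"
  unfolding Pe_def by (simp add: bil_ev1 bil_ev2)

lemma cliff_C2:
  assumes "clifford_system m q A" "j \<le> q" "r < 2*m" "r' < 2*m"
  shows "(\<Sum>a<2*m. A j r a * A j r' a) = (if r = r' then 1 else 0)"
proof -
  have cl: "\<forall>i\<le>q. \<forall>j\<le>q. \<forall>r<2*m. \<forall>s<2*m.
        (\<Sum>k<2*m. A i r k * A j k s) + (\<Sum>k<2*m. A j r k * A i k s)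
          = (if i = j \<and> r = s then 2 else 0)" and sy: "\<forall>i\<le>q. \<forall>r<2*m. \<forall>s<2*m. A i r s = A i s r"
    using assms(1) unfolding clifford_system_def by blast+
  have s: "\<And>k. k < 2*m \<Longrightarrow> A j k r' = A j r' k" using sy assms by blast
  have e: "(\<Sum>k<2*m. A j r k * A j k r') + (\<Sum>k<2*m. A j r k * A j k r') = (if j = j \<and> r = r' then 2 else 0)"
    using cl assms(2-4) by blast
  moreover have "(\<Sum>k<2*m. A j r k * A j k r') = (\<Sum>a<2*m. A j r a * A j r' a)"
    by (intro sum.cong refl) (simp add: s)
  ultimately show ?thesis by (auto split: if_splits)
qed

lemma cliff_C1:
  assumes "clifford_system m q A" "i \<le> q" "j \<le> q"
  shows "(\<Sum>a<2*m. \<Sum>b<2*m. A i a b * A j a b) = (if i = j then real (2*m) else 0)"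
proof -
  have cl: "\<forall>i\<le>q. \<forall>j\<le>q. \<forall>r<2*m. \<forall>s<2*m.
        (\<Sum>k<2*m. A i r k * A j k s) + (\<Sum>k<2*m. A j r k * A i k s)
          = (if i = j \<and> r = s then 2 else 0)" and sy: "\<forall>i\<le>q. \<forall>r<2*m. \<forall>s<2*m. A i r s = A i s r"
    using assms(1) unfolding clifford_system_def by blast+
  have row: "(\<Sum>b<2*m. A i a b * A j a b) = (if i = j then 1 else 0)" if a: "a < 2*m" for a
  proof -
    have si: "\<And>k. k < 2*m \<Longrightarrow> A i k a = A i a k" and sj: "\<And>k. k < 2*m \<Longrightarrow> A j k a = A j a k"
      using sy assms a by blast+
    have "(\<Sum>k<2*m. A i a k * A j k a) + (\<Sum>k<2*m. A j a k * A i k a) = (if i = j \<and> a = a then 2 else 0)"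
      using cl assms a by blast
    moreover have "(\<Sum>k<2*m. A i a k * A j k a) = (\<Sum>b<2*m. A i a b * A j a b)"
      by (intro sum.cong refl) (simp add: sj)
    moreover have "(\<Sum>k<2*m. A j a k * A i k a) = (\<Sum>b<2*m. A i a b * A j a b)"
      by (intro sum.cong refl) (simp add: si)
    ultimately show ?thesis by (auto split: if_splits)
  qed
  have "(\<Sum>a<2*m. \<Sum>b<2*m. A i a b * A j a b) = (\<Sum>a<2*m. (if i = j then 1 else 0::real))"
    by (intro sum.cong refl) (simp add: row)
  then show ?thesis by simp
qed

lemma prod_sums_swap:
  fixes X :: "nat \<Rightarrow> nat \<Rightarrow> nat \<Rightarrow> real"
  shows "(\<Sum>a\<in>S. \<Sum>b\<in>T. (\<Sum>i\<in>I. f i * X i a b) * (\<Sum>j\<in>I. g j * X j a b))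
       = (\<Sum>i\<in>I. \<Sum>j\<in>I. f i * g j * (\<Sum>a\<in>S. \<Sum>b\<in>T. X i a b * X j a b))"
proof -
  have "(\<Sum>a\<in>S. \<Sum>b\<in>T. (\<Sum>i\<in>I. f i * X i a b) * (\<Sum>j\<in>I. g j * X j a b))
      = (\<Sum>a\<in>S. \<Sum>b\<in>T. \<Sum>i\<in>I. \<Sum>j\<in>I. f i * g j * (X i a b * X j a b))"
    by (simp add: sum_product mult_ac)
  also have "\<dots> = (\<Sum>a\<in>S. \<Sum>i\<in>I. \<Sum>b\<in>T. \<Sum>j\<in>I. f i * g j * (X i a b * X j a b))"
    by (rule sum.cong[OF refl], rule sum.swap)
  also have "\<dots> = (\<Sum>i\<in>I. \<Sum>a\<in>S. \<Sum>b\<in>T. \<Sum>j\<in>I. f i * g j * (X i a b * X j a b))"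
    by (rule sum.swap)
  also have "\<dots> = (\<Sum>i\<in>I. \<Sum>a\<in>S. \<Sum>j\<in>I. \<Sum>b\<in>T. f i * g j * (X i a b * X j a b))"
    by (rule sum.cong[OF refl], rule sum.cong[OF refl], rule sum.swap)
  also have "\<dots> = (\<Sum>i\<in>I. \<Sum>j\<in>I. \<Sum>a\<in>S. \<Sum>b\<in>T. f i * g j * (X i a b * X j a b))"
    by (rule sum.cong[OF refl], rule sum.swap)
  also have "\<dots> = (\<Sum>i\<in>I. \<Sum>j\<in>I. f i * g j * (\<Sum>a\<in>S. \<Sum>b\<in>T. X i a b * X j a b))"
    by (simp add: sum_distrib_left)
  finally show ?thesis .
qed


lemma G_formula:
  assumes ca: "clifford_system m q A"
  shows "G m q A (2*m+q+1) x x' =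
    (\<Sum>k<2*m+q+1. (if k < 2*m then real (2*(q+1)) else real (2*m)) * x k * x' k)"
proof -
  let ?P = "\<lambda>x a b. Pe m q A x (ev a) (ev b)"
  have P3: "?P y (2*m+j) b = (\<Sum>r<2*m. y r * A j r b)" if "b < 2*m" "j \<le> q" for y j b
    using Pe_P2[OF that, of A y] Pe_sym23[OF ca, of y "ev b"] by simp
  define T1 where "T1 = (\<Sum>a<2*m. \<Sum>b<2*m. (\<Sum>i\<le>q. x (2*m+i) * A i a b) * (\<Sum>i\<le>q. x' (2*m+i) * A i a b))"
  define T2 where "T2 = (\<Sum>a<2*m. \<Sum>j\<le>q. (\<Sum>r<2*m. x r * A j r a) * (\<Sum>r<2*m. x' r * A j r a))"
  define T3 where "T3 = (\<Sum>j\<le>q. \<Sum>b<2*m. (\<Sum>r<2*m. x r * A j r b) * (\<Sum>r<2*m. x' r * A j r b))"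
  have "G m q A (2*m+q+1) x x' = (\<Sum>a<2*m. \<Sum>b<2*m+q+1. ?P x a b * ?P x' a b)
        + (\<Sum>j\<le>q. \<Sum>b<2*m+q+1. ?P x (2*m+j) b * ?P x' (2*m+j) b)"
    unfolding G_def by (rule split_sum)
  also have "(\<Sum>a<2*m. \<Sum>b<2*m+q+1. ?P x a b * ?P x' a b) = T1 + T2"
  proof -
    have "(\<Sum>a<2*m. \<Sum>b<2*m+q+1. ?P x a b * ?P x' a b)
        = (\<Sum>a<2*m. (\<Sum>b<2*m. ?P x a b * ?P x' a b) + (\<Sum>j\<le>q. ?P x a (2*m+j) * ?P x' a (2*m+j)))"
      by (intro sum.cong refl split_sum)
    also have "\<dots> = (\<Sum>a<2*m. (\<Sum>b<2*m. (\<Sum>i\<le>q. x (2*m+i) * A i a b) * (\<Sum>i\<le>q. x' (2*m+i) * A i a b))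
        + (\<Sum>j\<le>q. (\<Sum>r<2*m. x r * A j r a) * (\<Sum>r<2*m. x' r * A j r a)))"
      by (intro sum.cong refl arg_cong2[where f = "(+)"]) (simp_all add: Pe_P1 Pe_P2)
    finally show ?thesis unfolding T1_def T2_def by (simp add: sum.distrib)
  qed
  also have "(\<Sum>j\<le>q. \<Sum>b<2*m+q+1. ?P x (2*m+j) b * ?P x' (2*m+j) b) = T3"
  proof -
    have "(\<Sum>j\<le>q. \<Sum>b<2*m+q+1. ?P x (2*m+j) b * ?P x' (2*m+j) b)
        = (\<Sum>j\<le>q. (\<Sum>b<2*m. ?P x (2*m+j) b * ?P x' (2*m+j) b) + (\<Sum>i\<le>q. ?P x (2*m+j) (2*m+i) * ?P x' (2*m+j) (2*m+i)))"
      by (intro sum.cong refl split_sum)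
    also have "\<dots> = T3" unfolding T3_def
      by (intro sum.cong refl) (simp add: Pe_P4 P3)
    finally show ?thesis .
  qed
  also have "T3 = T2" unfolding T2_def T3_def by (rule sum.swap)
  also have "T1 = (\<Sum>i\<le>q. real (2*m) * (x (2*m+i) * x' (2*m+i)))"
  proof -
    have "T1 = (\<Sum>i\<le>q. \<Sum>j\<le>q. x (2*m+i) * x' (2*m+j) * (\<Sum>a<2*m. \<Sum>b<2*m. A i a b * A j a b))"
      unfolding T1_def by (rule prod_sums_swap)
    also have "\<dots> = (\<Sum>i\<le>q. \<Sum>j\<le>q. x (2*m+i) * x' (2*m+j) * (if i = j then real (2*m) else 0))"
      by (intro sum.cong refl) (simp add: cliff_C1[OF ca])
    also have "\<dots> = (\<Sum>i\<le>q. real (2*m) * (x (2*m+i) * x' (2*m+i)))"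
    proof (intro sum.cong refl)
      fix i assume "i \<in> {..q}"
      have "(\<Sum>j\<le>q. x (2*m+i) * x' (2*m+j) * (if i = j then real (2*m) else 0))
          = (\<Sum>j\<le>q. if i = j then x (2*m+i) * x' (2*m+j) * real (2*m) else 0)"
        by (intro sum.cong) auto
      also have "\<dots> = real (2*m) * (x (2*m+i) * x' (2*m+i))" using \<open>i \<in> {..q}\<close>
        by (subst sum.delta') auto
      finally show "(\<Sum>j\<le>q. x (2*m+i) * x' (2*m+j) * (if i = j then real (2*m) else 0))
          = real (2*m) * (x (2*m+i) * x' (2*m+i))" .
    qed
    finally show ?thesis .
  qed
  also have "T2 = (\<Sum>j\<le>q. \<Sum>r<2*m. x r * x' r)"
  proof -
    have "T2 = (\<Sum>j\<le>q. \<Sum>a<2*m. (\<Sum>r<2*m. A j r a * x r) * (\<Sum>r<2*m. A j r a * x' r))"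
      unfolding T2_def by (subst sum.swap) (simp add: mult.commute)
    also have "\<dots> = (\<Sum>j\<le>q. \<Sum>r<2*m. x r * x' r)"
      by (intro sum.cong refl rows_lemma) (simp add: cliff_C2[OF ca])
    finally show ?thesis .
  qed
  finally have L: "G m q A (2*m+q+1) x x' = (\<Sum>i\<le>q. real (2*m) * (x (2*m+i) * x' (2*m+i)))
      + 2 * (\<Sum>j\<le>q. \<Sum>r<2*m. x r * x' r)" by simp
  have R: "(\<Sum>k<2*m+q+1. (if k < 2*m then real (2*(q+1)) else real (2*m)) * x k * x' k)
     = (\<Sum>k<2*m. real (2*(q+1)) * x k * x' k) + (\<Sum>j\<le>q. real (2*m) * x (2*m+j) * x' (2*m+j))"
    by (subst split_sum) (simp add: atLeast0LessThan[symmetric])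
  show ?thesis unfolding L R
    by (simp add: sum_distrib_left mult_ac)
qed

lemma ev_sum: "k < n \<Longrightarrow> (\<Sum>l<n. d l * ev k l * y l) = d k * (y k :: real)"
proof -
  assume k: "k < n"
  have "(\<Sum>l<n. d l * ev k l * y l) = (\<Sum>l<n. if l = k then d l * y l else 0)"
    by (intro sum.cong refl) (simp add: ev_def)
  also have "\<dots> = d k * y k" using k by (subst sum.delta) auto
  finally show ?thesis .
qed

theorem corollary2:
  fixes m M q Q n :: nat
    and A B :: "nat \<Rightarrow> nat \<Rightarrow> nat \<Rightarrow> real"
  assumes "m \<ge> 1" "M \<ge> 1" "q \<ge> 1" "Q \<ge> 1"
    and "2*m + q + 1 = n" "2*M + Q + 1 = n"
    and "clifford_system m q A" "clifford_system M Q B"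
    and "congruent_on n (Phi m q A) (Phi M Q B)"
  shows "q = Q"
proof -
  note ca = assms(7) and cb = assms(8)
  obtain U c where U: "orthogonal_mat n U" and c: "c \<noteq> 0"
    and h: "\<And>x. (\<forall>i\<ge>n. x i = 0) \<Longrightarrow> Phi m q A x = c * Phi M Q B (mat_apply n U x)"
    using assms(9) unfolding congruent_on_def by blast
  have orth: "\<And>i j. i<n \<Longrightarrow> j<n \<Longrightarrow> (\<Sum>k<n. U i k * U j k) = (if i=j then 1 else (0::real))"
    using orth_rows[OF U] by blast
  define dA where "dA = (\<lambda>k. if k < 2*m then real (2*(q+1)) else real (2*m))"
  define dB where "dB = (\<lambda>k. if k < 2*M then real (2*(Q+1)) else real (2*M))"
  have GA: "\<And>x x'. G m q A n x x' = (\<Sum>k<n. dA k * x k * x' k)"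
    using G_formula[OF ca] unfolding assms(5) dA_def by simp
  have GB: "\<And>x x'. G M Q B n x x' = (\<Sum>k<n. dB k * x k * x' k)"
    using G_formula[OF cb] unfolding assms(6) dB_def by simp
  have GT: "\<And>x x'. (\<forall>i\<ge>n. x i = 0) \<Longrightarrow> (\<forall>i\<ge>n. x' i = 0) \<Longrightarrow>
      G m q A n x x' = c^2 * G M Q B n (mat_apply n U x) (mat_apply n U x')"
    by (rule G_transfer[OF ca cb assms(6)[symmetric] orth h]) auto
  have col: "mat_apply n U (ev k) = (\<lambda>i. if i < n then U i k else 0)" if "k < n" for k
    using that unfolding mat_apply_def ev_def by (auto simp: fun_eq_iff if_distrib cong: if_cong)
  have se: "\<forall>i\<ge>n. ev a i = 0" if "a < n" for a using that by (auto simp: ev_def)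
  have eig: "\<exists>k<n. c^2 * dB j = dA k" if j: "j < n" for j
  proof -
    define ut where "ut = (\<lambda>k. if k < n then U j k else (0::real))"
    have sut: "\<forall>i\<ge>n. ut i = 0" unfolding ut_def by auto
    have mut: "mat_apply n U ut = ev j"
    proof -
      have "mat_apply n U ut = (\<lambda>i. if i < n then (\<Sum>k<n. U i k * U j k) else 0)"
        unfolding mat_apply_def ut_def by (auto simp: fun_eq_iff intro!: sum.cong)
      also have "\<dots> = ev j" using j by (auto simp: fun_eq_iff orth ev_def)
      finally show ?thesis .
    qed
    have key: "dA k * U j k = c^2 * dB j * U j k" if k: "k < n" for k
    proof -
      have "G m q A n ut (ev k) = dA k * U j k"
        using ev_sum[OF k, of "\<lambda>l. dA l * ut l" "\<lambda>l. 1"] k unfolding GA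
        by (simp add: ut_def mult_ac)
      moreover have "G M Q B n (ev j) (mat_apply n U (ev k)) = dB j * U j k"
        using ev_sum[OF j, of dB "mat_apply n U (ev k)"] j unfolding GB col[OF k] by simp
      ultimately show ?thesis using GT[OF sut se[OF k]] mut by (metis mult.assoc)
    qed
    have "\<exists>k<n. U j k \<noteq> 0"
    proof (rule ccontr)
      assume "\<not> (\<exists>k<n. U j k \<noteq> 0)"
      then have "(\<Sum>k<n. U j k * U j k) = 0" by simp
      with orth[OF j j] show False by simp
    qed
    then obtain k where "k < n" "U j k \<noteq> 0" by blast
    then show ?thesis using key[of k] by auto
  qed
  have trace: "(\<Sum>k<n. dA k) = c^2 * (\<Sum>l<n. dB l)"
  proof -
    have "(\<Sum>k<n. dA k) = (\<Sum>k<n. G m q A n (ev k) (ev k))"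
      by (intro sum.cong refl) (simp add: GA ev_sum, simp add: ev_def)
    also have "\<dots> = (\<Sum>k<n. c^2 * (\<Sum>l<n. dB l * U l k * U l k))"
      by (intro sum.cong refl) (simp add: GT se GB col)
    also have "\<dots> = c^2 * (\<Sum>k<n. \<Sum>l<n. dB l * U l k * U l k)"
      by (simp only: sum_distrib_left)
    also have "\<dots> = c^2 * (\<Sum>l<n. \<Sum>k<n. dB l * U l k * U l k)"
      by (rule arg_cong[where f = "\<lambda>t. c^2 * t"], rule sum.swap)
    also have "\<dots> = c^2 * (\<Sum>l<n. dB l * (\<Sum>k<n. U l k * U l k))"
      by (simp only: sum_distrib_left mult.assoc)
    also have "\<dots> = c^2 * (\<Sum>l<n. dB l)" by (simp add: orth)
    finally show ?thesis .
  qed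
  have sA: "(\<Sum>k<n. dA k) = 6 * real m * (real q + 1)"
  proof -
    have "(\<Sum>k<n. dA k) = (\<Sum>k<2*m. dA k) + (\<Sum>j\<le>q. dA (2*m+j))"
      unfolding assms(5)[symmetric] by (rule split_sum)
    also have "(\<Sum>k<2*m. dA k) = (\<Sum>k<2*m. real (2*(q+1)))"
      by (intro sum.cong refl) (simp add: dA_def)
    also have "(\<Sum>j\<le>q. dA (2*m+j)) = (\<Sum>j\<le>q. real (2*m))"
      by (intro sum.cong refl) (simp add: dA_def)
    finally show ?thesis by (simp add: algebra_simps)
  qed
  have sB: "(\<Sum>k<n. dB k) = 6 * real M * (real Q + 1)"
  proof -
    have "(\<Sum>k<n. dB k) = (\<Sum>k<2*M. dB k) + (\<Sum>j\<le>Q. dB (2*M+j))"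
      unfolding assms(6)[symmetric] by (rule split_sum)
    also have "(\<Sum>k<2*M. dB k) = (\<Sum>k<2*M. real (2*(Q+1)))"
      by (intro sum.cong refl) (simp add: dB_def)
    also have "(\<Sum>j\<le>Q. dB (2*M+j)) = (\<Sum>j\<le>Q. real (2*M))"
      by (intro sum.cong refl) (simp add: dB_def)
    finally show ?thesis by (simp add: algebra_simps)
  qed
  have n0: "0 < n" "2*M < n" using assms by auto
  obtain k1 where k1: "k1 < n" "c^2 * dB 0 = dA k1" using eig[OF n0(1)] by blast
  have dB0: "dB 0 = 2*(real Q+1)" using assms(2) by (simp add: dB_def)
  have dA1: "dA k1 = 2*(real q+1) \<or> dA k1 = 2*real m" by (simp add: dA_def)
  have d1: "2*(c^2*(real Q+1)) = dA k1" using k1(2) unfolding dB0 by (simp only: mult.left_commute)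
  have e1: "c^2*(real Q+1) = real q+1 \<or> c^2*(real Q+1) = real m"
  proof (rule disjE[OF dA1])
    assume "dA k1 = 2*(real q+1)" then have "2*(c^2*(real Q+1)) = 2*(real q+1)" using d1 by simp
    then show ?thesis by (intro disjI1) simp
  next
    assume "dA k1 = 2*real m" then have "2*(c^2*(real Q+1)) = 2*real m" using d1 by simp
    then show ?thesis by (intro disjI2) simp
  qed
  obtain k2 where k2: "k2 < n" "c^2 * dB (2*M) = dA k2" using eig[OF n0(2)] by blast
  have dB2: "dB (2*M) = 2*real M" by (simp add: dB_def)
  have dA2: "dA k2 = 2*(real q+1) \<or> dA k2 = 2*real m" by (simp add: dA_def)
  have d2: "2*(c^2*real M) = dA k2" using k2(2) unfolding dB2 by (simp only: mult.left_commute)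
  have e2: "c^2*real M = real q+1 \<or> c^2*real M = real m"
  proof (rule disjE[OF dA2])
    assume "dA k2 = 2*(real q+1)" then have "2*(c^2*real M) = 2*(real q+1)" using d2 by simp
    then show ?thesis by (intro disjI1) simp
  next
    assume "dA k2 = 2*real m" then have "2*(c^2*real M) = 2*real m" using d2 by simp
    then show ?thesis by (intro disjI2) simp
  qed
  have tr: "real m * (real q + 1) = c^2 * (real M * (real Q + 1))"
    using trace sA sB by simp
  have l: "2 * real m + real q = 2 * real M + real Q" using assms(5,6) by linarith
  have "real q = real Q"
  proof (rule arith_fin[OF _ _ _ _ _ e1 e2 tr l])
    show "c^2 > 0" using c by simp
    show "real m \<ge> 1" "real M \<ge> 1" "real q \<ge> 1" "real Q \<ge> 1" using assms(1-4) by simp_all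
  qed
  then show ?thesis by simp
qed

end
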